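(* Let $(M,\mathcal M,m)$ be a probability space, $D_0\supseteq D_1\supseteq\cdots$ measurable sets with $m(D_N)\to0$ as $N\to\infty$, $\mathcal I\subseteq\mathcal M$ a sub-$\sigma$-algebra, and $\mathcal G_N:=\mathcal I\vee\sigma(A\in\mathcal M: A\subseteq D_N)$. Then, with $\mathcal N:=\{A\in\mathcal M:m(A)=0\}$, $\bigcap_{N=0}^\infty(\mathcal G_N\vee\mathcal N)\subseteq\mathcal I\vee\mathcal N$. *)

theory Defs
  imports "HOL-Probability.Probability"
begin

definition sa_join :: "'a set \<Rightarrow> 'a set set \<Rightarrow> 'a set set \<Rightarrow> 'a set set" where
  "sa_join \<Omega> F G = sigma_sets \<Omega> (F \<union> G)"

end

theory Submission
  imports Defs
begin

theorem lemma4p4: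
  fixes M :: "'a measure" and D :: "nat \<Rightarrow> 'a set" and I :: "'a set set"
  assumes "prob_space M"
    and "\<And>N. D N \<in> sets M"
    and "decseq D"
    and "(\<lambda>N. measure M (D N)) \<longlonglongrightarrow> 0"
    and "sigma_algebra (space M) I"
    and "I \<subseteq> sets M"
  shows "(\<Inter>N. sa_join (space M)
            (sa_join (space M) I (sigma_sets (space M) {A \<in> sets M. A \<subseteq> D N}))
            (null_sets M))
         \<subseteq> sa_join (space M) I (null_sets M)"
proof
  interpret P: prob_space M by fact
  interpret SI: sigma_algebra "space M" I by fact
  define \<Omega> where "\<Omega> = space M"
  have Isp: "C \<subseteq> \<Omega>" if "C \<in> I" for C
    using that assms(6) sets.sets_into_space unfolding \<Omega>_def by blast
  define F where "F N = {B \<in> sets M. \<exists>C\<in>I. \<exists>Z\<in>null_sets M. (B - C) \<union> (C - B) \<subseteq> D N \<union> Z}" for N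
  have saF: "sigma_algebra \<Omega> (F N)" for N
    unfolding sigma_algebra_iff2
  proof (intro conjI allI ballI impI)
    show "F N \<subseteq> Pow \<Omega>" unfolding F_def \<Omega>_def using sets.sets_into_space by auto
    show "{} \<in> F N" unfolding F_def using SI.empty_sets by blast
  next
    fix s assume "s \<in> F N"
    then obtain C Z where s: "s \<in> sets M" "C \<in> I" "Z \<in> null_sets M" "(s - C) \<union> (C - s) \<subseteq> D N \<union> Z"
      unfolding F_def by blast
    have "\<Omega> - C \<in> I" using s(2) SI.compl_sets unfolding \<Omega>_def by blast
    moreover have "((\<Omega> - s) - (\<Omega> - C)) \<union> ((\<Omega> - C) - (\<Omega> - s)) \<subseteq> D N \<union> Z"
      using s(4) by blast
    ultimately show "\<Omega> - s \<in> F N" using s unfolding F_def \<Omega>_def by blast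
  next
    fix A :: "nat \<Rightarrow> 'a set" assume "range A \<subseteq> F N"
    then have "\<forall>i. \<exists>C Z. A i \<in> sets M \<and> C \<in> I \<and> Z \<in> null_sets M \<and> (A i - C) \<union> (C - A i) \<subseteq> D N \<union> Z"
      unfolding F_def by blast
    then obtain C Z where cz: "\<And>i. A i \<in> sets M \<and> C i \<in> I \<and> Z i \<in> null_sets M \<and> (A i - C i) \<union> (C i - A i) \<subseteq> D N \<union> Z i"
      by metis
    have "(\<Union>i. C i) \<in> I" using cz by auto
    moreover have "(\<Union>i. Z i) \<in> null_sets M" using cz by auto
    moreover have "(\<Union>i. A i) \<in> sets M" using cz by auto
    moreover have "((\<Union>i. A i) - (\<Union>i. C i)) \<union> ((\<Union>i. C i) - (\<Union>i. A i)) \<subseteq> D N \<union> (\<Union>i. Z i)"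
      using cz by blast
    ultimately show "(\<Union>i. A i) \<in> F N" unfolding F_def by blast
  qed
  have IF: "I \<subseteq> F N" for N
  proof
    fix C assume "C \<in> I"
    then show "C \<in> F N" unfolding F_def using assms(6) by blast
  qed
  have DF: "{A \<in> sets M. A \<subseteq> D N} \<subseteq> F N" for N
    unfolding F_def using SI.empty_sets by blast
  have NF: "null_sets M \<subseteq> F N" for N
  proof
    fix Z assume "Z \<in> null_sets M"
    then show "Z \<in> F N" unfolding F_def using SI.empty_sets by blast
  qed
  have sub: "sa_join \<Omega> (sa_join \<Omega> I (sigma_sets \<Omega> {A \<in> sets M. A \<subseteq> D N})) (null_sets M) \<subseteq> F N" for N
  proof -
    have "sigma_sets \<Omega> {A \<in> sets M. A \<subseteq> D N} \<subseteq> F N"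
      using sigma_algebra.sigma_sets_subset[OF saF DF] .
    then have "sa_join \<Omega> I (sigma_sets \<Omega> {A \<in> sets M. A \<subseteq> D N}) \<subseteq> F N"
      unfolding sa_join_def by (intro sigma_algebra.sigma_sets_subset[OF saF]) (use IF in auto)
    then show ?thesis
      unfolding sa_join_def by (intro sigma_algebra.sigma_sets_subset[OF saF]) (use NF in auto)
  qed
  fix B assume "B \<in> (\<Inter>N. sa_join (space M)
            (sa_join (space M) I (sigma_sets (space M) {A \<in> sets M. A \<subseteq> D N}))
            (null_sets M))"
  then have "B \<in> F N" for N using sub unfolding \<Omega>_def by blast
  then have "\<forall>N. \<exists>C Z. B \<in> sets M \<and> C \<in> I \<and> Z \<in> null_sets M \<and> (B - C) \<union> (C - B) \<subseteq> D N \<union> Z"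
    unfolding F_def by blast
  then obtain C Z where cz: "\<And>N. B \<in> sets M \<and> C N \<in> I \<and> Z N \<in> null_sets M \<and> (B - C N) \<union> (C N - B) \<subseteq> D N \<union> Z N"
    by metis
  have czS: "(B - C N) \<union> (C N - B) \<subseteq> D N \<union> Z N" for N using cz by auto
  define C0 where "C0 = (\<Inter>n. \<Union>k\<in>{n..}. C k)"
  have C0I: "C0 \<in> I" unfolding C0_def using cz by auto
  have ZU: "(\<Union>i. Z i) \<in> null_sets M" using cz by auto
  have DI: "(\<Inter>i. D i) \<in> sets M" using assms(2) by auto
  have "measure M (\<Inter>i. D i) \<le> 0"
  proof (rule LIMSEQ_le_const[OF assms(4)])
    show "\<exists>N. \<forall>n\<ge>N. measure M (\<Inter>i. D i) \<le> measure M (D n)"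
      using assms(2) DI by (intro exI[of _ 0] allI impI P.finite_measure_mono) auto
  qed
  then have "measure M (\<Inter>i. D i) = 0" using measure_nonneg[of M "\<Inter>i. D i"] by linarith
  then have DN: "(\<Inter>i. D i) \<in> null_sets M" using DI P.emeasure_eq_measure by (simp add: null_sets_def)
  have Bm: "B \<in> sets M" using cz by blast
  have C0m: "C0 \<in> sets M" using C0I assms(6) by blast
  have dec: "x \<in> D m \<Longrightarrow> n \<le> m \<Longrightarrow> x \<in> D n" for x m n
    using assms(3) unfolding decseq_def by blast
  have "(B - C0) \<union> (C0 - B) \<subseteq> (\<Inter>i. D i) \<union> (\<Union>i. Z i)"
  proof
    fix x assume x: "x \<in> (B - C0) \<union> (C0 - B)"
    show "x \<in> (\<Inter>i. D i) \<union> (\<Union>i. Z i)"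
    proof (cases "x \<in> (\<Union>i. Z i)")
      case True then show ?thesis by blast
    next
      case False
      have "x \<in> D n" for n
      proof -
        obtain m where m: "m \<ge> n" "x \<in> D m \<union> Z m"
        proof (cases "x \<in> B")
          case True
          then have "x \<notin> C0" using x by blast
          then obtain k where k: "\<forall>j\<ge>k. x \<notin> C j" unfolding C0_def by auto
          have "x \<in> B - C (max n k)" using True k by auto
          moreover have "B - C (max n k) \<subseteq> D (max n k) \<union> Z (max n k)" using czS[of "max n k"] by auto
          ultimately show ?thesis using that[of "max n k"] by auto
        next
          case False
          then have "x \<in> C0" using x by blast
          then obtain j where j: "j \<ge> n" "x \<in> C j" unfolding C0_def by auto
          have "C j - B \<subseteq> D j \<union> Z j" using czS[of j] by auto
          then show ?thesis using that[of j] j False by auto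
        qed
        have "x \<notin> Z m" using \<open>x \<notin> (\<Union>i. Z i)\<close> by auto
        then have "x \<in> D m" using m by auto
        then show ?thesis using dec m(1) by auto
      qed
      then show ?thesis by blast
    qed
  qed
  then have nul: "(B - C0) \<union> (C0 - B) \<in> null_sets M"
    by (intro null_sets_subset[OF null_sets.Un[OF DN ZU]]) (use Bm C0m in auto)
  have n1: "B - C0 \<in> null_sets M"
    by (rule null_sets_subset[OF nul]) (use Bm C0m in auto)
  have n2: "C0 - B \<in> null_sets M"
    by (rule null_sets_subset[OF nul]) (use Bm C0m in auto)
  have Beq: "B = (C0 - (C0 - B)) \<union> (B - C0)" by blast
  have jn: "C0 \<in> sa_join (space M) I (null_sets M)" "C0 - B \<in> sa_join (space M) I (null_sets M)"
    "B - C0 \<in> sa_join (space M) I (null_sets M)"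
    unfolding sa_join_def using C0I n1 n2 by (auto intro: sigma_sets.Basic)
  have SA: "sigma_algebra (space M) (sa_join (space M) I (null_sets M))"
    unfolding sa_join_def
    by (rule sigma_algebra_sigma_sets) (use assms(6) sets.sets_into_space in auto)
  interpret SJ: sigma_algebra "space M" "sa_join (space M) I (null_sets M)" by (rule SA)
  show "B \<in> sa_join (space M) I (null_sets M)"
    by (subst Beq) (intro SJ.Un SJ.Diff jn)
qed

end
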